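(* Let $(E,d_E)$ be a complete metric space and let $(A_n)_{n\ge 1}$ be a sequence of compact fuzzy sets in $E$. 1. Suppose that for every $\alpha\in(0,1]$ and every $n$ we have $A_{n+1}^\alpha\subseteq A_n^\alpha$. Then there is a compact fuzzy set $A$ in $E$ with $A^\alpha=\bigcap_{n\ge1}A_n^\alpha$ for every $\alpha\in(0,1]$, and $A_n\to A$ levelwise. 2. Under the hypothesis of item 1, for every $x\in E$ we have $A_n(x)\to A(x)$, where $A$ is the compact fuzzy set of item 1. 3. If for every $x\in E$ the sequence $(A_n(x))_{n\ge1}$ is non-increasing and converges to $A(x)$, where $A$ is a compact fuzzy set in $E$, then $A_n\to A$ levelwise.
   Context: A (normalized) fuzzy set in a set $\Omega$ is a function $A:\Omega\to[0,1]$ such that $A(x_0)=1$ for some $x_0\in\Omega$. For $\alpha\in(0,1]$ its $\alpha$-cut is $A^\alpha=\{x\in\Omega: A(x)\ge\alpha\}$. A compact fuzzy set in a topological space $E$ is a fuzzy set in $E$ all of whose $\alpha$-cuts, $\alpha\in(0,1]$, are nonempty and compact. $\mathcal K(E)$ denotes the set of nonempty compact subsets of a metric space $(E,d_E)$ with the Hausdorff metric $d_{\mathcal K(E)}(K,L)=\max\big(\sup_{x\in K}\inf_{y\in L}d_E(x,y),\ \sup_{x\in L}\inf_{y\in K}d_E(x,y)\big)$. A sequence $(A_n)$ of compact fuzzy sets converges levelwise to a compact fuzzy set $A$ if for every $\alpha\in(0,1]$, $A_n^\alpha\to A^\alpha$ in $(\mathcal K(E),d_{\mathcal K(E)})$.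 *)

theory Defs
  imports "HOL-Analysis.Analysis"
begin

definition fuzzy_set :: "('a \<Rightarrow> real) \<Rightarrow> bool" where
  "fuzzy_set A \<longleftrightarrow> (\<forall>x. 0 \<le> A x \<and> A x \<le> 1) \<and> (\<exists>x0. A x0 = 1)"

definition alpha_cut :: "('a \<Rightarrow> real) \<Rightarrow> real \<Rightarrow> 'a set" where
  "alpha_cut A \<alpha> = {x. A x \<ge> \<alpha>}"

definition compact_fuzzy_set :: "('a::topological_space \<Rightarrow> real) \<Rightarrow> bool" where
  "compact_fuzzy_set A \<longleftrightarrow> fuzzy_set A \<and>
     (\<forall>\<alpha>\<in>{0<..1}. alpha_cut A \<alpha> \<noteq> {} \<and> compact (alpha_cut A \<alpha>))"

definition hausdorff_dist :: "'a::metric_space set \<Rightarrow> 'a set \<Rightarrow> real" where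
  "hausdorff_dist K L =
     max (SUP x\<in>K. INF y\<in>L. dist x y) (SUP x\<in>L. INF y\<in>K. dist x y)"

definition levelwise_conv :: "(nat \<Rightarrow> 'a::metric_space \<Rightarrow> real) \<Rightarrow> ('a \<Rightarrow> real) \<Rightarrow> bool" where
  "levelwise_conv An A \<longleftrightarrow>
     (\<forall>\<alpha>\<in>{0<..1}. (\<lambda>n. hausdorff_dist (alpha_cut (An n) \<alpha>) (alpha_cut A \<alpha>)) \<longlonglongrightarrow> 0)"

end

theory Submission
  imports Defs
begin

lemma nest_mono:
  fixes K :: "nat \<Rightarrow> 'a set"
  assumes "\<And>n. K (Suc n) \<subseteq> K n" "m \<le> n" shows "K n \<subseteq> K m"
  using lift_Suc_antimono_le[of K, OF assms] by simp

lemma nest_ne: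
  fixes K :: "nat \<Rightarrow> 'a::metric_space set"
  assumes cK: "\<And>n. compact (K n)" and ne: "\<And>n. K n \<noteq> {}" and dec: "\<And>n. K (Suc n) \<subseteq> K n"
  shows "(\<Inter>n. K n) \<noteq> {}" "compact (\<Inter>n. K n)"
proof -
  have "K 0 \<inter> (\<Inter>i\<in>UNIV. K i) \<noteq> {}"
  proof (rule compact_imp_fip_image[OF cK])
    show "closed (K i)" for i using cK compact_imp_closed by blast
    fix I' :: "nat set" assume "finite I'"
    let ?N = "Max (insert 0 I')"
    have "K ?N \<subseteq> K 0 \<inter> (\<Inter>i\<in>I'. K i)"
    proof -
      have "i \<le> ?N" if "i \<in> insert 0 I'" for i using that \<open>finite I'\<close> by simp
      then have "K ?N \<subseteq> K i" if "i \<in> insert 0 I'" for i using that nest_mono[of K, OF dec] by blast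
      then show ?thesis by blast
    qed
    then show "K 0 \<inter> (\<Inter>i\<in>I'. K i) \<noteq> {}" using ne by blast
  qed
  then show "(\<Inter>n. K n) \<noteq> {}" by blast
  have "(\<Inter>n. K n) = K 0 \<inter> (\<Inter>n. K n)" by blast
  moreover have "closed (\<Inter>n. K n)" using cK compact_imp_closed by blast
  ultimately show "compact (\<Inter>n. K n)" using compact_Int_closed[OF cK[of 0]] by metis
qed

lemma haus_nest:
  fixes K :: "nat \<Rightarrow> 'a::metric_space set"
  assumes cK: "\<And>n. compact (K n)" and ne: "\<And>n. K n \<noteq> {}" and dec: "\<And>n. K (Suc n) \<subseteq> K n"
  shows "(\<lambda>n. hausdorff_dist (K n) (\<Inter>n. K n)) \<longlonglongrightarrow> 0"
proof (rule LIMSEQ_I)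
  fix e :: real assume e: "0 < e"
  define L where "L = (\<Inter>n. K n)"
  have Lne: "L \<noteq> {}" using nest_ne[of K, OF cK ne dec] L_def by simp
  define U where "U = {x. infdist x L < e/2}"
  have oU: "open U" unfolding U_def
    by (rule open_Collect_less) (auto intro: continuous_intros)
  have "\<not> (K 0 \<inter> (\<Inter>i\<in>UNIV. K i - U) \<noteq> {})"
    using e by (auto simp: U_def L_def)
  then obtain I' where I': "finite I'" "K 0 \<inter> (\<Inter>i\<in>I'. K i - U) = {}"
  proof -
    have "closed (K i - U)" for i using cK compact_imp_closed oU closed_Diff by blast
    then show ?thesis using compact_imp_fip_image[OF cK[of 0], of UNIV "\<lambda>i. K i - U"] that
      \<open>\<not> (K 0 \<inter> (\<Inter>i\<in>UNIV. K i - U) \<noteq> {})\<close> by blast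
  qed
  define N where "N = Max (insert 0 I')"
  have KN: "K n \<subseteq> U" if "n \<ge> N" for n
  proof -
    have "K n - U \<subseteq> K 0 \<inter> (\<Inter>i\<in>I'. K i - U)"
    proof -
      have "i \<le> n" if "i \<in> insert 0 I'" for i using that I'(1) \<open>n \<ge> N\<close> N_def
        by (meson Max_ge finite_insert order_trans)
      then show ?thesis using nest_mono[of K, OF dec] by blast
    qed
    then show ?thesis using I' by blast
  qed
  show "\<exists>no. \<forall>n\<ge>no. norm (hausdorff_dist (K n) (\<Inter>n. K n) - 0) < e"
  proof (intro exI allI impI)
    fix n assume n: "n \<ge> N"
    have LK: "L \<subseteq> K n" unfolding L_def by blast
    have z: "(INF y\<in>K n. dist x y) = 0" if "x \<in> L" for x
    proof (rule antisym)
      show "(INF y\<in>K n. dist x y) \<le> 0"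
      proof -
        have "x \<in> K n" using LK that by blast
        moreover have "bdd_below ((\<lambda>y. dist x y) ` K n)" by (rule bdd_belowI2[of _ 0]) simp
        ultimately have "(INF y\<in>K n. dist x y) \<le> dist x x" by (rule cINF_lower[rotated])
        then show ?thesis by simp
      qed
      show "0 \<le> (INF y\<in>K n. dist x y)" using ne by (intro cINF_greatest) auto
    qed
    have S2: "(SUP x\<in>L. INF y\<in>K n. dist x y) = 0"
      using z Lne by simp
    have S1: "(SUP x\<in>K n. INF y\<in>L. dist x y) \<le> e/2"
    proof (rule cSUP_least)
      show "K n \<noteq> {}" by (rule ne)
      fix x assume "x \<in> K n"
      then have "infdist x L < e/2" using KN[OF n] U_def by blast
      then show "(INF y\<in>L. dist x y) \<le> e/2" using Lne by (simp add: infdist_notempty)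
    qed
    show "norm (hausdorff_dist (K n) (\<Inter>n. K n) - 0) < e"
      using S1 S2 e unfolding hausdorff_dist_def L_def[symmetric] by auto
  qed
qed

lemma cuts_dec_pointwise:
  assumes cf: "\<And>n. compact_fuzzy_set (An n)"
    and H: "\<forall>\<alpha>\<in>{0<..1}. \<forall>n. alpha_cut (An (Suc n)) \<alpha> \<subseteq> alpha_cut (An n) \<alpha>"
  shows "An (Suc n) x \<le> An n x"
proof (cases "An (Suc n) x \<le> 0")
  case True
  then show ?thesis using cf[of n] unfolding compact_fuzzy_set_def fuzzy_set_def
    by (meson order_trans)
next
  case False
  have "An (Suc n) x \<le> 1" using cf[of "Suc n"] unfolding compact_fuzzy_set_def fuzzy_set_def by blast
  with False have "An (Suc n) x \<in> {0<..1}" by auto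
  with H have "alpha_cut (An (Suc n)) (An (Suc n) x) \<subseteq> alpha_cut (An n) (An (Suc n) x)" by blast
  then show ?thesis unfolding alpha_cut_def by auto
qed

lemma cut_inf:
  fixes An :: "nat \<Rightarrow> 'a \<Rightarrow> real"
  assumes "\<And>n x. 0 \<le> An n x"
  shows "alpha_cut (\<lambda>x. INF n. An n x) \<alpha> = (\<Inter>n. alpha_cut (An n) \<alpha>)"
proof -
  have "bdd_below (range (\<lambda>n. An n x))" for x using assms by (intro bdd_belowI2[of _ 0]) auto
  then show ?thesis unfolding alpha_cut_def by (auto simp: le_cINF_iff)
qed

theorem mainTheorem1:
  fixes An :: "nat \<Rightarrow> 'a::complete_space \<Rightarrow> real"
  assumes "\<And>n. compact_fuzzy_set (An n)"
  shows "((\<forall>\<alpha>\<in>{0<..1}. \<forall>n. alpha_cut (An (Suc n)) \<alpha> \<subseteq> alpha_cut (An n) \<alpha>) \<longrightarrow>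
           ((\<exists>A. compact_fuzzy_set A \<and>
                 (\<forall>\<alpha>\<in>{0<..1}. alpha_cut A \<alpha> = (\<Inter>n. alpha_cut (An n) \<alpha>)) \<and>
                 levelwise_conv An A) \<and>
            (\<forall>A. compact_fuzzy_set A \<and>
                 (\<forall>\<alpha>\<in>{0<..1}. alpha_cut A \<alpha> = (\<Inter>n. alpha_cut (An n) \<alpha>)) \<longrightarrow>
                 (\<forall>x. (\<lambda>n. An n x) \<longlonglongrightarrow> A x))))
         \<and> (\<forall>A. compact_fuzzy_set A \<and> (\<forall>x. decseq (\<lambda>n. An n x) \<and> (\<lambda>n. An n x) \<longlonglongrightarrow> A x)
               \<longrightarrow> levelwise_conv An A)"
proof -
  note cf = assms
  have nn: "0 \<le> An n x" and le1: "An n x \<le> 1" for n x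
    using cf[of n] unfolding compact_fuzzy_set_def fuzzy_set_def by auto
  have cutc: "compact (alpha_cut (An n) \<alpha>)" "alpha_cut (An n) \<alpha> \<noteq> {}" if "\<alpha> \<in> {0<..1}" for n \<alpha>
    using cf[of n] that unfolding compact_fuzzy_set_def by auto
  have bdd: "bdd_below (range (\<lambda>n. An n x))" for x using nn by (intro bdd_belowI2[of _ 0]) auto
  have P1: "(\<exists>A. compact_fuzzy_set A \<and>
                 (\<forall>\<alpha>\<in>{0<..1}. alpha_cut A \<alpha> = (\<Inter>n. alpha_cut (An n) \<alpha>)) \<and>
                 levelwise_conv An A) \<and>
            (\<forall>A. compact_fuzzy_set A \<and>
                 (\<forall>\<alpha>\<in>{0<..1}. alpha_cut A \<alpha> = (\<Inter>n. alpha_cut (An n) \<alpha>)) \<longrightarrow>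
                 (\<forall>x. (\<lambda>n. An n x) \<longlonglongrightarrow> A x))"
    if H: "\<forall>\<alpha>\<in>{0<..1}. \<forall>n. alpha_cut (An (Suc n)) \<alpha> \<subseteq> alpha_cut (An n) \<alpha>"
  proof
    have dec: "An (Suc n) x \<le> An n x" for n x using cuts_dec_pointwise[OF cf H] .
    have decs: "decseq (\<lambda>n. An n x)" for x using dec by (simp add: decseq_Suc_iff)
    define A where "A = (\<lambda>x. INF n. An n x)"
    have cutA: "alpha_cut A \<alpha> = (\<Inter>n. alpha_cut (An n) \<alpha>)" for \<alpha>
      unfolding A_def by (rule cut_inf[OF nn])
    have decK: "alpha_cut (An (Suc n)) \<alpha> \<subseteq> alpha_cut (An n) \<alpha>" if "\<alpha> \<in> {0<..1}" for n \<alpha>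
      using H that by blast
    have Ane: "alpha_cut A \<alpha> \<noteq> {}" and Ac: "compact (alpha_cut A \<alpha>)" if "\<alpha> \<in> {0<..1}" for \<alpha>
      using nest_ne[of "\<lambda>n. alpha_cut (An n) \<alpha>", OF cutc(1)[OF that] cutc(2)[OF that] decK[OF that]]
      unfolding cutA by auto
    have A01: "0 \<le> A x \<and> A x \<le> 1" for x
    proof
      show "0 \<le> A x" unfolding A_def using nn by (intro cINF_greatest) auto
      have "A x \<le> An 0 x" unfolding A_def by (rule cINF_lower[OF bdd]) simp
      then show "A x \<le> 1" using le1[of 0 x] by linarith
    qed
    obtain x0 where "x0 \<in> alpha_cut A 1" using Ane[of 1] by auto
    then have "A x0 = 1" using A01[of x0] unfolding alpha_cut_def by auto
    then have cfA: "compact_fuzzy_set A"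
      unfolding compact_fuzzy_set_def fuzzy_set_def using A01 Ane Ac by blast
    have "levelwise_conv An A" unfolding levelwise_conv_def
    proof
      fix \<alpha> :: real assume a: "\<alpha> \<in> {0<..1}"
      show "(\<lambda>n. hausdorff_dist (alpha_cut (An n) \<alpha>) (alpha_cut A \<alpha>)) \<longlonglongrightarrow> 0"
        unfolding cutA
        by (rule haus_nest[of "\<lambda>n. alpha_cut (An n) \<alpha>", OF cutc(1)[OF a] cutc(2)[OF a] decK[OF a]])
    qed
    then show "\<exists>A. compact_fuzzy_set A \<and>
                 (\<forall>\<alpha>\<in>{0<..1}. alpha_cut A \<alpha> = (\<Inter>n. alpha_cut (An n) \<alpha>)) \<and>
                 levelwise_conv An A" using cfA cutA by blast
    show "\<forall>B. compact_fuzzy_set B \<and>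
                 (\<forall>\<alpha>\<in>{0<..1}. alpha_cut B \<alpha> = (\<Inter>n. alpha_cut (An n) \<alpha>)) \<longrightarrow>
                 (\<forall>x. (\<lambda>n. An n x) \<longlonglongrightarrow> B x)"
    proof (intro allI impI)
      fix B x assume hB: "compact_fuzzy_set B \<and>
                 (\<forall>\<alpha>\<in>{0<..1}. alpha_cut B \<alpha> = (\<Inter>n. alpha_cut (An n) \<alpha>))"
      have B01: "0 \<le> B x" "B x \<le> 1" using conjunct1[OF hB] unfolding compact_fuzzy_set_def fuzzy_set_def by auto
      define L where "L = (INF n. An n x)"
      have lim: "(\<lambda>n. An n x) \<longlonglongrightarrow> L" unfolding L_def by (rule LIMSEQ_decseq_INF[OF bdd decs])
      have L01: "0 \<le> L" "L \<le> 1" using A01[of x] unfolding A_def L_def by auto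
      have "B x \<le> L"
      proof (cases "B x \<le> 0")
        case True then show ?thesis using L01 by linarith
      next
        case False
        then have a: "B x \<in> {0<..1}" using B01 by auto
        have "x \<in> alpha_cut B (B x)" unfolding alpha_cut_def by simp
        moreover have "alpha_cut B (B x) = (\<Inter>n. alpha_cut (An n) (B x))" using conjunct2[OF hB] a by (rule bspec)
        ultimately have "x \<in> (\<Inter>n. alpha_cut (An n) (B x))" by simp
        then have "\<forall>n. B x \<le> An n x" unfolding alpha_cut_def by auto
        then show ?thesis unfolding L_def by (intro cINF_greatest) auto
      qed
      moreover have "L \<le> B x"
      proof (cases "L \<le> 0")
        case True then show ?thesis using B01 by linarith
      next
        case False
        then have a: "L \<in> {0<..1}" using L01 by auto
        have "\<forall>n. L \<le> An n x" unfolding L_def using bdd by (auto intro: cINF_lower)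
        then have "x \<in> (\<Inter>n. alpha_cut (An n) L)" unfolding alpha_cut_def by auto
        moreover have "alpha_cut B L = (\<Inter>n. alpha_cut (An n) L)" using conjunct2[OF hB] a by (rule bspec)
        ultimately have "x \<in> alpha_cut B L" by simp
        then show ?thesis unfolding alpha_cut_def by auto
      qed
      ultimately show "(\<lambda>n. An n x) \<longlonglongrightarrow> B x" using lim by simp
    qed
  qed
  have P3: "levelwise_conv An A"
    if hA: "compact_fuzzy_set A \<and> (\<forall>x. decseq (\<lambda>n. An n x) \<and> (\<lambda>n. An n x) \<longlonglongrightarrow> A x)" for A
    unfolding levelwise_conv_def
  proof
    fix \<alpha> :: real assume a: "\<alpha> \<in> {0<..1}"
    have hd: "decseq (\<lambda>n. An n x)" and hl: "(\<lambda>n. An n x) \<longlonglongrightarrow> A x" for x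
      using hA by auto
    have decK: "alpha_cut (An (Suc n)) \<alpha> \<subseteq> alpha_cut (An n) \<alpha>" for n
    proof
      fix x assume "x \<in> alpha_cut (An (Suc n)) \<alpha>"
      moreover have "An (Suc n) x \<le> An n x" using hd[of x] by (simp add: decseq_Suc_iff)
      ultimately show "x \<in> alpha_cut (An n) \<alpha>" unfolding alpha_cut_def by auto
    qed
    have "alpha_cut A \<alpha> = (\<Inter>n. alpha_cut (An n) \<alpha>)"
    proof
      show "alpha_cut A \<alpha> \<subseteq> (\<Inter>n. alpha_cut (An n) \<alpha>)"
      proof
        fix x assume "x \<in> alpha_cut A \<alpha>"
        moreover have "A x \<le> An n x" for n using decseq_ge[OF hd hl] .
        ultimately show "x \<in> (\<Inter>n. alpha_cut (An n) \<alpha>)" unfolding alpha_cut_def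
          by (auto intro: order_trans)
      qed
      show "(\<Inter>n. alpha_cut (An n) \<alpha>) \<subseteq> alpha_cut A \<alpha>"
      proof
        fix x assume "x \<in> (\<Inter>n. alpha_cut (An n) \<alpha>)"
        then have "\<forall>n. \<alpha> \<le> An n x" unfolding alpha_cut_def by auto
        then have "\<alpha> \<le> A x" using LIMSEQ_le_const[OF hl[of x], of \<alpha>] by auto
        then show "x \<in> alpha_cut A \<alpha>" unfolding alpha_cut_def by auto
      qed
    qed
    then show "(\<lambda>n. hausdorff_dist (alpha_cut (An n) \<alpha>) (alpha_cut A \<alpha>)) \<longlonglongrightarrow> 0"
      using haus_nest[of "\<lambda>n. alpha_cut (An n) \<alpha>", OF cutc(1)[OF a] cutc(2)[OF a] decK] by simp
  qed
  show ?thesis using P1 P3 by blast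
qed

end
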